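(* Let $G$ be a graph with $N$ vertices and maximum degree $\Delta$, and let $R_{\max}$ be a positive integer. For each vertex subset $X$ with $\mathrm{diam}(X)\le R_{\max}$, let $h_X$ be an operator supported in $X$ (possibly zero, not necessarily Hermitian) with $h_X|W\rangle=h_X|\overline 0\rangle=0$. If for some $p\in\{0,\dots,N\}$ with $p\le N/(\Delta^{2R_{\max}}+1)$ one has $\left(\sum_{X:\mathrm{diam}(X)\le R_{\max}}h_X\right)|W^p\rangle=E'_p|W^p\rangle$ with $E'_p\in\mathbb{C}$, then $E'_p=0$.
   Context: System of $N$ qubits on the vertices of a graph $G$ with local basis $|0\rangle,|1\rangle$; $s_i^\dagger$ acts on vertex $i$ as $s^\dagger|0\rangle=|1\rangle$, $s^\dagger|1\rangle=0$; $|\overline 0\rangle=|0\rangle^{\otimes N}$. Distances are graph distances; for a vertex set $X$, $\mathrm{diam}(X)=1+\max_{i,j\in X}(\text{graph distance between }i,j)$. An operator is supported in $X$ if it acts as the identity outside $X$. $S^\dagger=\sum_i s_i^\dagger$; for $p=0,\dots,N$, $|W^p\rangle$ is the normalization of $(S^\dagger)^p|\overline 0\rangle$ (the equal-weight superposition of all basis states with exactly $p$ vertices in state $|1\rangle$), and $|W\rangle=|W^1\rangle$. *)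

theory Defs
  imports Complex_Main "HOL-Library.Extended_Nat"
begin

definition simple_graph :: "'a set \<Rightarrow> ('a \<Rightarrow> 'a \<Rightarrow> bool) \<Rightarrow> bool" where
  "simple_graph V E \<longleftrightarrow> finite V \<and> (\<forall>i j. E i j \<longrightarrow> i \<in> V \<and> j \<in> V)
     \<and> (\<forall>i j. E i j \<longrightarrow> E j i) \<and> (\<forall>i. \<not> E i i)"

definition max_degree :: "'a set \<Rightarrow> ('a \<Rightarrow> 'a \<Rightarrow> bool) \<Rightarrow> nat" where
  "max_degree V E = Max (insert 0 ((\<lambda>i. card {j \<in> V. E i j}) ` V))"

definition walk :: "('a \<Rightarrow> 'a \<Rightarrow> bool) \<Rightarrow> nat \<Rightarrow> 'a \<Rightarrow> 'a \<Rightarrow> bool" where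
  "walk E n i j \<longleftrightarrow> (\<exists>f :: nat \<Rightarrow> 'a. f 0 = i \<and> f n = j \<and> (\<forall>k<n. E (f k) (f (Suc k))))"

text \<open>Graph distance (infinite if no path).\<close>
definition gdist :: "('a \<Rightarrow> 'a \<Rightarrow> bool) \<Rightarrow> 'a \<Rightarrow> 'a \<Rightarrow> enat" where
  "gdist E i j = (INF n \<in> {n. walk E n i j}. enat n)"

definition diam :: "('a \<Rightarrow> 'a \<Rightarrow> bool) \<Rightarrow> 'a set \<Rightarrow> enat" where
  "diam E X = 1 + (SUP ij \<in> X \<times> X. gdist E (fst ij) (snd ij))"

text \<open>States: functions on the computational basis, a basis state being identified with
  the set of vertices in state |1>. Operators: matrices indexed by basis states.\<close>
type_synonym 'a state = "'a set \<Rightarrow> complex"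
type_synonym 'a op = "'a set \<Rightarrow> 'a set \<Rightarrow> complex"

definition op_apply :: "'a set \<Rightarrow> 'a op \<Rightarrow> 'a state \<Rightarrow> 'a state" where
  "op_apply V H \<psi> = (\<lambda>S. \<Sum>T\<in>Pow V. H S T * \<psi> T)"

text \<open>H acts as identity outside X, i.e. H = A_X \<otimes> 1.\<close>
definition supported_in :: "'a set \<Rightarrow> 'a set \<Rightarrow> 'a op \<Rightarrow> bool" where
  "supported_in V X H \<longleftrightarrow> (\<exists>A :: 'a op. \<forall>S \<in> Pow V. \<forall>T \<in> Pow V.
      H S T = (if S - X = T - X then A (S \<inter> X) (T \<inter> X) else 0))"

definition zero_state :: "'a state" where
  "zero_state = (\<lambda>S. if S = {} then 1 else 0)"

definition Wp :: "'a set \<Rightarrow> nat \<Rightarrow> 'a state" where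
  "Wp V p = (\<lambda>S. if card S = p then complex_of_real (1 / sqrt (real (card V choose p))) else 0)"

end

theory Submission imports Defs begin

lemma walk_0: "walk E 0 i j \<longleftrightarrow> i = j"
  unfolding walk_def by auto

lemma walk_Suc: "walk E (Suc k) i j \<longleftrightarrow> (\<exists>l. walk E k i l \<and> E l j)"
proof
  assume "walk E (Suc k) i j"
  then obtain f where f: "f 0 = i" "f (Suc k) = j" "\<forall>m<Suc k. E (f m) (f (Suc m))"
    unfolding walk_def by blast
  then have "walk E k i (f k)" unfolding walk_def by auto
  moreover have "E (f k) j" using f by auto
  ultimately show "\<exists>l. walk E k i l \<and> E l j" by blast
next
  assume "\<exists>l. walk E k i l \<and> E l j"
  then obtain l f where f: "f 0 = i" "f k = l" "\<forall>m<k. E (f m) (f (Suc m))" "E l j"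
    unfolding walk_def by blast
  define g where "g = f(Suc k := j)"
  have "g 0 = i" "g (Suc k) = j" using f by (auto simp: g_def)
  moreover have "\<forall>m<Suc k. E (g m) (g (Suc m))"
  proof (intro allI impI)
    fix m assume "m < Suc k"
    then consider "m < k" | "m = k" by linarith
    then show "E (g m) (g (Suc m))"
      by cases (use f in \<open>auto simp: g_def\<close>)
  qed
  ultimately show "walk E (Suc k) i j" unfolding walk_def by blast
qed

lemma nbr_card:
  assumes "simple_graph V E" "l \<in> V"
  shows "card {j \<in> V. E l j} \<le> max_degree V E"
proof -
  have "finite V" using assms unfolding simple_graph_def by auto
  then show ?thesis unfolding max_degree_def
    using assms(2) by (intro Max_ge) auto
qed

lemma walk_in_V:
  assumes "simple_graph V E" "i \<in> V" "walk E k i j"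
  shows "j \<in> V"
  using assms(3)
proof (induction k arbitrary: j)
  case 0 then show ?case using assms by (simp add: walk_0)
next
  case (Suc k) then show ?case using assms(1) unfolding simple_graph_def by (auto simp: walk_Suc)
qed

lemma Nk_sub: assumes "simple_graph V E" "i \<in> V" shows "{j. walk E k i j} \<subseteq> V"
  using walk_in_V[OF assms] by blast

lemma Nk_card:
  assumes g: "simple_graph V E" and i: "i \<in> V"
  shows "card {j. walk E k i j} \<le> max_degree V E ^ k"
proof (induction k)
  case 0 then show ?case by (simp add: walk_0)
next
  case (Suc k)
  have fV: "finite V" using g unfolding simple_graph_def by auto
  have eq: "{j. walk E (Suc k) i j} = (\<Union>l\<in>{j. walk E k i j}. {j \<in> V. E l j})"
    using g unfolding simple_graph_def by (auto simp: walk_Suc)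
  have fin: "finite {j. walk E k i j}" using Nk_sub[OF g i] fV finite_subset by blast
  have "card {j. walk E (Suc k) i j} \<le> (\<Sum>l\<in>{j. walk E k i j}. card {j \<in> V. E l j})"
    unfolding eq by (rule card_UN_le[OF fin])
  also have "\<dots> \<le> (\<Sum>l\<in>{j. walk E k i j}. max_degree V E)"
    apply (rule sum_mono) using nbr_card[OF g] Nk_sub[OF g i] by blast
  also have "\<dots> = card {j. walk E k i j} * max_degree V E" by simp
  also have "\<dots> \<le> max_degree V E ^ k * max_degree V E" using Suc by simp
  finally show ?case by (simp add: mult.commute)
qed

lemma geo_bound: "(d::nat) \<ge> 2 \<Longrightarrow> (\<Sum>k<n. d ^ k) + 1 \<le> d ^ n"
proof (induction n)
  case 0 then show ?case by simp
next
  case (Suc n)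
  have "(\<Sum>k<Suc n. d ^ k) + 1 = (\<Sum>k<n. d ^ k) + 1 + d ^ n" by simp
  also have "\<dots> \<le> 2 * d ^ n" using Suc by simp
  also have "\<dots> \<le> d * d ^ n" using Suc(2) by simp
  finally show ?case by simp
qed

definition ball :: "('a \<Rightarrow> 'a \<Rightarrow> bool) \<Rightarrow> nat \<Rightarrow> 'a \<Rightarrow> 'a set" where
  "ball E R i = {j. \<exists>n<R. walk E n i j}"

lemma ball_sub: assumes "simple_graph V E" "i \<in> V" shows "ball E R i \<subseteq> V"
  unfolding ball_def using walk_in_V[OF assms] by blast

lemma ball_fin: "simple_graph V E \<Longrightarrow> i \<in> V \<Longrightarrow> finite (ball E R i)"
proof -
  assume g: "simple_graph V E" and i: "i \<in> V"
  have "finite V" using g unfolding simple_graph_def by auto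
  then show ?thesis using ball_sub[OF g i] finite_subset by blast
qed

lemma ball_card_small:
  assumes g: "simple_graph V E" and i: "i \<in> V" and d: "max_degree V E \<le> 1"
  shows "card (ball E R i) \<le> 1 + max_degree V E"
proof -
  have sub: "walk E k i j \<Longrightarrow> j \<in> insert i {j \<in> V. E i j}" for k j
  proof (induction k arbitrary: j)
    case 0 then show ?case by (simp add: walk_0)
  next
    case (Suc k)
    then obtain l where l: "walk E k i l" "E l j" by (auto simp: walk_Suc)
    from Suc.IH[OF l(1)] consider "l = i" | "l \<in> V" "E i l" by auto
    then show ?case
    proof cases
      case 1 then show ?thesis using l g unfolding simple_graph_def by auto
    next
      case 2
      have jV: "j \<in> V" "E l i" using l 2 g unfolding simple_graph_def by auto
      have fin: "finite {m \<in> V. E l m}" using g unfolding simple_graph_def by auto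
      have "card {m \<in> V. E l m} \<le> 1" using nbr_card[OF g 2(1)] d by simp
      moreover have "{i, j} \<subseteq> {m \<in> V. E l m}" using jV l i by auto
      ultimately have "card {i, j} \<le> 1" using card_mono[OF fin] by (meson le_trans)
      then have "i = j" by (cases "i = j") auto
      then show ?thesis by simp
    qed
  qed
  have fin: "finite {j \<in> V. E i j}" using g unfolding simple_graph_def by auto
  have "ball E R i \<subseteq> insert i {j \<in> V. E i j}" unfolding ball_def using sub by blast
  then have "card (ball E R i) \<le> card (insert i {j \<in> V. E i j})"
    using fin by (intro card_mono) auto
  also have "\<dots> \<le> 1 + card {j \<in> V. E i j}" using fin by (simp add: card_insert_le_m1)
  also have "\<dots> \<le> 1 + max_degree V E" using nbr_card[OF g i] by simp
  finally show ?thesis .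
qed

lemma ball_card:
  assumes g: "simple_graph V E" and i: "i \<in> V" and R: "R > 0"
  shows "card (ball E R i) \<le> max_degree V E ^ (2 * R) + 1"
proof (cases "max_degree V E \<le> 1")
  case True
  let ?d = "max_degree V E"
  have "?d ^ (2 * R) = ?d"
  proof (cases "?d = 0")
    case True then show ?thesis using R by simp
  next
    case False then have "?d = 1" using \<open>?d \<le> 1\<close> by linarith
    then show ?thesis by simp
  qed
  moreover have "card (ball E R i) \<le> 1 + ?d" by (rule ball_card_small[OF g i True])
  ultimately show ?thesis by linarith
next
  case False
  let ?d = "max_degree V E"
  have eq: "ball E R i = (\<Union>k<R. {j. walk E k i j})" unfolding ball_def by auto
  have "card (ball E R i) \<le> (\<Sum>k<R. card {j. walk E k i j})"
    unfolding eq by (rule card_UN_le) simp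
  also have "\<dots> \<le> (\<Sum>k<R. ?d ^ k)" by (intro sum_mono Nk_card[OF g i])
  also have "\<dots> \<le> ?d ^ R" using geo_bound[of ?d R] False by linarith
  also have "\<dots> \<le> ?d ^ (2 * R)" using False by (intro power_increasing) simp_all
  finally show ?thesis by linarith
qed


lemma greedy:
  assumes g: "simple_graph V E" and R: "R > 0"
    and m: "m * (max_degree V E ^ (2 * R) + 1) \<le> card V"
  shows "\<exists>S \<subseteq> V. card S = m \<and>
           (\<forall>i\<in>S. \<forall>j\<in>S. i \<noteq> j \<longrightarrow> j \<notin> ball E R i \<or> i \<notin> ball E R j)"
  using m
proof (induction m)
  case 0 then show ?case by (intro exI[of _ "{}"]) auto
next
  case (Suc m)
  let ?B = "max_degree V E ^ (2 * R) + 1"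
  have fV: "finite V" using g unfolding simple_graph_def by auto
  from Suc.prems have "m * ?B \<le> card V" by simp
  from Suc.IH[OF this] obtain S where S: "S \<subseteq> V" "card S = m"
    "\<forall>i\<in>S. \<forall>j\<in>S. i \<noteq> j \<longrightarrow> j \<notin> ball E R i \<or> i \<notin> ball E R j" by blast
  have finS: "finite S" using S(1) fV finite_subset by blast
  let ?U = "\<Union>i\<in>S. ball E R i"
  have "card ?U \<le> (\<Sum>i\<in>S. card (ball E R i))" using finS by (rule card_UN_le)
  also have "\<dots> \<le> (\<Sum>i\<in>S. ?B)" using S(1) by (intro sum_mono ball_card[OF g _ R]) blast
  also have "\<dots> = m * ?B" using S(2) by simp
  also have "\<dots> < card V" using Suc.prems by simp
  finally have lt: "card ?U < card V" .
  have Usub: "?U \<subseteq> V" using ball_sub[OF g] S(1) by blast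
  have "V - ?U \<noteq> {}"
  proof
    assume "V - ?U = {}"
    then have "V \<subseteq> ?U" by blast
    then have "card V \<le> card ?U" using fV Usub finite_subset by (metis card_mono)
    then show False using lt by simp
  qed
  then obtain v where v: "v \<in> V" "v \<notin> ?U" by blast
  have selfb: "i \<in> ball E R i" for i unfolding ball_def using R by (auto simp: walk_0)
  have vS: "v \<notin> S" using v selfb by blast
  show ?case
  proof (intro exI[of _ "insert v S"] conjI)
    show "insert v S \<subseteq> V" using S v by blast
    show "card (insert v S) = Suc m" using finS vS S by simp
    show "\<forall>i\<in>insert v S. \<forall>j\<in>insert v S. i \<noteq> j \<longrightarrow> j \<notin> ball E R i \<or> i \<notin> ball E R j"
      using S(3) v(2) by blast
  qed
qed

lemma diam_ball:
  assumes "i \<in> X" "j \<in> X" "diam E X \<le> enat R"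
  shows "j \<in> ball E R i"
proof -
  have "gdist E i j \<le> (SUP ij \<in> X \<times> X. gdist E (fst ij) (snd ij))"
    using assms by (intro SUP_upper2[of "(i,j)"]) auto
  then have "1 + gdist E i j \<le> enat R" using assms(3) unfolding diam_def
    by (meson add_left_mono order_trans)
  then have "gdist E i j < enat R"
    by (cases "gdist E i j") (auto simp: one_enat_def)
  then obtain n where "walk E n i j" "enat n < enat R"
    unfolding gdist_def by (auto simp: INF_less_iff)
  then show ?thesis unfolding ball_def by auto
qed

lemma op_local:
  assumes X: "X \<subseteq> V" and fV: "finite V" and sup: "supported_in V X H" and S: "S \<subseteq> V"
    and psi: "\<forall>T\<in>Pow V. T - X = S - X \<longrightarrow> \<psi> T = f (T \<inter> X)"
  shows "op_apply V H \<psi> S = op_apply V H f (S \<inter> X)"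
proof -
  obtain A where A: "\<forall>S \<in> Pow V. \<forall>T \<in> Pow V.
      H S T = (if S - X = T - X then A (S \<inter> X) (T \<inter> X) else 0)"
    using sup unfolding supported_in_def by blast
  have "op_apply V H \<psi> S = (\<Sum>T\<in>Pow V. if T - X = S - X then A (S \<inter> X) (T \<inter> X) * f (T \<inter> X) else 0)"
    unfolding op_apply_def using A S psi by (intro sum.cong) auto
  also have "\<dots> = (\<Sum>T\<in>{T\<in>Pow V. T - X = S - X}. A (S \<inter> X) (T \<inter> X) * f (T \<inter> X))"
    by (rule sum.inter_filter[symmetric]) (use fV in simp)
  also have "\<dots> = (\<Sum>U\<in>Pow X. A (S \<inter> X) U * f U)"
    by (rule sum.reindex_bij_witness[where i = "\<lambda>U. U \<union> (S - X)" and j = "\<lambda>T. T \<inter> X"])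
       (use X S in auto)
  finally have L: "op_apply V H \<psi> S = (\<Sum>U\<in>Pow X. A (S \<inter> X) U * f U)" .
  have "op_apply V H f (S \<inter> X) = (\<Sum>T\<in>Pow V. if T \<subseteq> X then A (S \<inter> X) T * f T else 0)"
    unfolding op_apply_def
  proof (intro sum.cong refl)
    fix T assume T: "T \<in> Pow V"
    have SX: "S \<inter> X \<in> Pow V" using S by auto
    have "H (S \<inter> X) T = (if (S \<inter> X) - X = T - X then A ((S \<inter> X) \<inter> X) (T \<inter> X) else 0)"
      using A SX T by blast
    moreover have "((S \<inter> X) - X = T - X) = (T \<subseteq> X)" by auto
    moreover have "T \<subseteq> X \<Longrightarrow> T \<inter> X = T" by auto
    ultimately show "H (S \<inter> X) T * f T = (if T \<subseteq> X then A (S \<inter> X) T * f T else 0)"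
      by (simp add: Int_absorb2)
  qed
  also have "\<dots> = (\<Sum>T\<in>{T\<in>Pow V. T \<subseteq> X}. A (S \<inter> X) T * f T)"
    by (rule sum.inter_filter[symmetric]) (use fV in simp)
  also have "{T\<in>Pow V. T \<subseteq> X} = Pow X" using X by auto
  finally show ?thesis using L by simp
qed

lemma op_scale: "op_apply V H (\<lambda>U. c * \<phi> U) S = c * op_apply V H \<phi> S"
  unfolding op_apply_def by (simp add: sum_distrib_left algebra_simps)

lemma card_split: "finite T \<Longrightarrow> card T = card (T - X) + card (T \<inter> X)"
  by (metis Int_Diff_Un Int_Diff_disjoint card_Un_disjoint finite_Diff finite_Int add.commute)


lemma local_zero:
  assumes fV: "finite V" and X: "X \<subseteq> V" and sup: "supported_in V X H"
    and kW: "\<And>S. S \<subseteq> V \<Longrightarrow> op_apply V H (Wp V 1) S = 0"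
    and k0: "\<And>S. S \<subseteq> V \<Longrightarrow> op_apply V H zero_state S = 0"
    and S: "S \<subseteq> V" "card S = p" and SX: "card (S \<inter> X) \<le> 1"
  shows "op_apply V H (Wp V p) S = 0"
proof -
  let ?cp = "complex_of_real (1 / sqrt (real (card V choose p)))"
  have finS: "finite S" using S fV finite_subset by blast
  have cS: "card S = card (S - X) + card (S \<inter> X)" using card_split[OF finS] .
  have cT: "T \<in> Pow V \<Longrightarrow> T - X = S - X \<Longrightarrow> card T = card (S - X) + card (T \<inter> X)" for T
    using card_split[of T X] fV finite_subset by auto
  have SXV: "S \<inter> X \<subseteq> V" using S by auto
  consider "card (S \<inter> X) = 0" | "card (S \<inter> X) = 1" using SX by linarith
  then show ?thesis
  proof cases
    case 1
    have "op_apply V H (Wp V p) S = op_apply V H (\<lambda>U. ?cp * zero_state U) (S \<inter> X)"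
    proof (rule op_local[OF X fV sup S(1)], intro ballI impI)
      fix T assume T: "T \<in> Pow V" "T - X = S - X"
      have fTX: "finite (T \<inter> X)" using T fV by (meson Int_lower1 PowD finite_subset)
      have "(card T = p) = (T \<inter> X = {})" using cT[OF T] cS 1 S(2) fTX by auto
      then show "Wp V p T = ?cp * zero_state (T \<inter> X)"
        unfolding Wp_def zero_state_def by auto
    qed
    also have "\<dots> = 0" unfolding op_scale using k0[OF SXV] by simp
    finally show ?thesis .
  next
    case 2
    have p1: "p \<ge> 1" "card V \<ge> 1" using 2 cS S(2) card_mono[OF fV S(1)] by auto
    let ?c1 = "complex_of_real (1 / sqrt (real (card V choose 1)))"
    have c1: "?c1 \<noteq> 0" using p1 by simp
    have "op_apply V H (Wp V p) S = op_apply V H (\<lambda>U. (?cp / ?c1) * Wp V 1 U) (S \<inter> X)"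
    proof (rule op_local[OF X fV sup S(1)], intro ballI impI)
      fix T assume T: "T \<in> Pow V" "T - X = S - X"
      have "(card T = p) = (card (T \<inter> X) = 1)" using cT[OF T] cS 2 S(2) by auto
      then show "Wp V p T = (?cp / ?c1) * Wp V 1 (T \<inter> X)"
        unfolding Wp_def using c1 by auto
    qed
    also have "\<dots> = 0" unfolding op_scale using kW[OF SXV] by simp
    finally show ?thesis .
  qed
qed

theorem proposition5:
  fixes V :: "'a set" and E :: "'a \<Rightarrow> 'a \<Rightarrow> bool" and Rmax p :: nat
    and h :: "'a set \<Rightarrow> 'a op" and E' :: complex
  assumes graph: "simple_graph V E"
    and R_pos: "Rmax > 0"
    and supp: "\<And>X. X \<subseteq> V \<Longrightarrow> diam E X \<le> enat Rmax \<Longrightarrow> supported_in V X (h X)"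
    and killW: "\<And>X S. X \<subseteq> V \<Longrightarrow> diam E X \<le> enat Rmax \<Longrightarrow> S \<subseteq> V \<Longrightarrow>
                   op_apply V (h X) (Wp V 1) S = 0"
    and kill0: "\<And>X S. X \<subseteq> V \<Longrightarrow> diam E X \<le> enat Rmax \<Longrightarrow> S \<subseteq> V \<Longrightarrow>
                   op_apply V (h X) zero_state S = 0"
    and p_le_N: "p \<le> card V"
    and p_bound: "real p \<le> real (card V) / (real (max_degree V E) ^ (2 * Rmax) + 1)"
    and eig: "\<And>S. S \<subseteq> V \<Longrightarrow>
       (\<Sum>X\<in>{X. X \<subseteq> V \<and> diam E X \<le> enat Rmax}. op_apply V (h X) (Wp V p) S) = E' * Wp V p S"
  shows "E' = 0"
proof -
  have fV: "finite V" using graph unfolding simple_graph_def by auto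
  let ?B = "max_degree V E ^ (2 * Rmax) + 1"
  have Bpos: "real ?B > 0" by (simp add: add_pos_nonneg)
  have "real p * real ?B \<le> real (card V)"
    using p_bound Bpos by (simp add: pos_le_divide_eq add.commute)
  then have pB: "p * ?B \<le> card V" by (metis of_nat_le_iff of_nat_mult)
  obtain S where S: "S \<subseteq> V" "card S = p"
    "\<forall>i\<in>S. \<forall>j\<in>S. i \<noteq> j \<longrightarrow> j \<notin> ball E Rmax i \<or> i \<notin> ball E Rmax j"
    using greedy[OF graph R_pos pB] by blast
  have finS: "finite S" using S(1) fV finite_subset by blast
  have zero: "op_apply V (h X) (Wp V p) S = 0"
    if X: "X \<in> {X. X \<subseteq> V \<and> diam E X \<le> enat Rmax}" for X
  proof -
    have XV: "X \<subseteq> V" and dX: "diam E X \<le> enat Rmax" using X by auto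
    have "card (S \<inter> X) \<le> 1"
    proof -
      have "\<forall>a1\<in>S \<inter> X. \<forall>a2\<in>S \<inter> X. a1 = a2"
      proof (intro ballI, rule ccontr)
        fix a1 a2 assume a: "a1 \<in> S \<inter> X" "a2 \<in> S \<inter> X" "a1 \<noteq> a2"
        have "a2 \<in> ball E Rmax a1" "a1 \<in> ball E Rmax a2"
          using diam_ball[OF _ _ dX] a by auto
        then show False using S(3) a by blast
      qed
      then show ?thesis using finS card_le_Suc0_iff_eq[of "S \<inter> X"] by simp
    qed
    then show ?thesis
      using local_zero[OF fV XV supp[OF XV dX] killW[OF XV dX] kill0[OF XV dX] S(1) S(2)]
      by blast
  qed
  have "E' * Wp V p S = 0" using eig[OF S(1)] zero by simp
  moreover have "Wp V p S \<noteq> 0" using S(2) p_le_N unfolding Wp_def by simp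
  ultimately show ?thesis by simp
qed

end
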